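(* Let $s,s'\in\mathbb C$ and $f\in C_c^{\mathrm{lc}}(G/M)$. Then $\mathcal R_{s,s'}f$ is a well-defined, locally constant, compactly supported function on $G/M\langle\tau\rangle$; equivalently, under the bijection $G/M\langle\tau\rangle\cong(\Omega\times\Omega)\setminus\mathrm{diag}(\Omega)$, $\mathcal R_{s,s'}f\in C_c^{\mathrm{lc}}((\Omega\times\Omega)\setminus\mathrm{diag}(\Omega))$.
   Context: Let $q\ge2$, $\mathfrak G$ the $(q+1)$-regular tree with vertex set $\mathfrak X$, graph distance $d$ and boundary $\Omega$ (infinite non-backtracking edge chains modulo eventual equality up to shift, topologized by the sets of classes of chains starting with a given directed edge). Fix a vertex $o$ and $\omega_-\ne\omega_+$ with $o$ on the geodesic $]\omega_-,\omega_+[$; $\langle x,\omega\rangle=d(o,y)-d(x,y)$ where $[o,\omega)\cap[x,\omega)=[y,\omega)$. $G=\mathrm{Aut}(\mathfrak G)$ (topology of pointwise convergence), $K=\mathrm{Stab}_G(o)$, $B_{\omega_+}=\{g:g\omega_+=\omega_+,\ g\text{ fixes a vertex}\}$, $\tau\in G$ fixes $\omega_\pm$ and translates $]\omega_-,\omega_+[$ one step towards $\omega_+$; $g=kn\tau^j$ ($k\in K,n\in B_{\omega_+}$) with unique $j=:H(g)$. $r\in K$ with $r^2=\mathrm{id}$, $r\tau^jr^{-1}=\tau^{-j}$. $M=\{\gamma\in K:\gamma$ fixes $]\omega_-,\omega_+[$ pointwise$\}$. $G/M$ is homeomorphic to $\mathfrak P=\{(\omega_1,\omega_2,x):\omega_1\neq\omega_2,\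 x\in]\omega_1,\omega_2[\}\subseteq\Omega\times\Omega\times\mathfrak X$ via $gM\mapsto(g\omega_-,g\omega_+,go)$; $C_c^{\mathrm{lc}}(G/M)$ denotes locally constant compactly supported functions. $G/M\langle\tau\rangle$ carries the quotient topology, and $gM\langle\tau\rangle\mapsto(g\omega_-,g\omega_+)$ is a bijection onto $(\Omega\times\Omega)\setminus\mathrm{diag}(\Omega)$. With $d_{s,s'}(gM)=q^{(\frac12+is)H(g)}q^{(\frac12+is')H(gr)}$, the weighted Radon transform is $(\mathcal R_{s,s'}f)(g)=\sum_{j\in\mathbb Z}f(g\tau^jM)\,d_{s,-\overline{s'}}(g\tau^jM)$. *)

theory Defs
  imports "HOL-Analysis.Analysis"
begin

text \<open>The tree is given by a vertex type 'v (the whole type is the vertex set)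
and an adjacency relation E.\<close>

definition is_cycle :: "('v \<Rightarrow> 'v \<Rightarrow> bool) \<Rightarrow> (nat \<Rightarrow> 'v) \<Rightarrow> nat \<Rightarrow> bool" where
  "is_cycle E p n \<longleftrightarrow> n \<ge> 3 \<and> p 0 = p n \<and> (\<forall>i<n. E (p i) (p (Suc i))) \<and> inj_on p {0..<n}"

definition regular_tree :: "nat \<Rightarrow> ('v \<Rightarrow> 'v \<Rightarrow> bool) \<Rightarrow> bool" where
  "regular_tree q E \<longleftrightarrow>
     (\<forall>x y. E x y \<longrightarrow> E y x) \<and> (\<forall>x. \<not> E x x) \<and>
     (\<forall>x y. E\<^sup>*\<^sup>* x y) \<and>
     (\<forall>p n. \<not> is_cycle E p n) \<and>
     (\<forall>x. finite {y. E x y} \<and> card {y. E x y} = q + 1)"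

text \<open>Infinite non-backtracking edge chains, represented by their vertex sequences.\<close>
definition nb_chain :: "('v \<Rightarrow> 'v \<Rightarrow> bool) \<Rightarrow> (nat \<Rightarrow> 'v) \<Rightarrow> bool" where
  "nb_chain E r \<longleftrightarrow> (\<forall>n. E (r n) (r (Suc n))) \<and> (\<forall>n. r n \<noteq> r (Suc (Suc n)))"

definition chain_equiv :: "(nat \<Rightarrow> 'v) \<Rightarrow> (nat \<Rightarrow> 'v) \<Rightarrow> bool" where
  "chain_equiv r r' \<longleftrightarrow> (\<exists>k l. \<forall>n. r (n + k) = r' (n + l))"

definition ends :: "('v \<Rightarrow> 'v \<Rightarrow> bool) \<Rightarrow> (nat \<Rightarrow> 'v) set set" where
  "ends E = {{r'. nb_chain E r' \<and> chain_equiv r r'} | r. nb_chain E r}"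

definition end_act :: "('v \<Rightarrow> 'v) \<Rightarrow> (nat \<Rightarrow> 'v) set \<Rightarrow> (nat \<Rightarrow> 'v) set" where
  "end_act g \<omega> = (\<lambda>r. g \<circ> r) ` \<omega>"

text \<open>Vertex x lies on the geodesic ]w1,w2[ iff the chains from x to w1 and to w2
leave x through different edges.\<close>
definition on_geod :: "(nat \<Rightarrow> 'v) set \<Rightarrow> (nat \<Rightarrow> 'v) set \<Rightarrow> 'v \<Rightarrow> bool" where
  "on_geod w1 w2 x \<longleftrightarrow> (\<exists>r1\<in>w1. \<exists>r2\<in>w2. r1 0 = x \<and> r2 0 = x \<and> r1 1 \<noteq> r2 1)"

definition Aut :: "('v \<Rightarrow> 'v \<Rightarrow> bool) \<Rightarrow> ('v \<Rightarrow> 'v) set" where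
  "Aut E = {g. bij g \<and> (\<forall>x y. E x y \<longleftrightarrow> E (g x) (g y))}"

definition Gtop :: "('v \<Rightarrow> 'v \<Rightarrow> bool) \<Rightarrow> ('v \<Rightarrow> 'v) topology" where
  "Gtop E = subtopology (product_topology (\<lambda>_. discrete_topology UNIV) UNIV) (Aut E)"

definition Kgrp :: "('v \<Rightarrow> 'v \<Rightarrow> bool) \<Rightarrow> 'v \<Rightarrow> ('v \<Rightarrow> 'v) set" where
  "Kgrp E v0 = {g \<in> Aut E. g v0 = v0}"

definition Bgrp :: "('v \<Rightarrow> 'v \<Rightarrow> bool) \<Rightarrow> (nat \<Rightarrow> 'v) set \<Rightarrow> ('v \<Rightarrow> 'v) set" where
  "Bgrp E wp = {g \<in> Aut E. end_act g wp = wp \<and> (\<exists>x. g x = x)}"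

definition Mgrp :: "('v \<Rightarrow> 'v \<Rightarrow> bool) \<Rightarrow> 'v \<Rightarrow> (nat \<Rightarrow> 'v) set \<Rightarrow> (nat \<Rightarrow> 'v) set
                     \<Rightarrow> ('v \<Rightarrow> 'v) set" where
  "Mgrp E v0 wm wp = {g \<in> Kgrp E v0. \<forall>x. on_geod wm wp x \<longrightarrow> g x = x}"

definition ipow :: "('v \<Rightarrow> 'v) \<Rightarrow> int \<Rightarrow> ('v \<Rightarrow> 'v)" where
  "ipow t j = (if j \<ge> 0 then t ^^ nat j else (inv t) ^^ nat (- j))"

definition Hc :: "('v \<Rightarrow> 'v \<Rightarrow> bool) \<Rightarrow> 'v \<Rightarrow> (nat \<Rightarrow> 'v) set \<Rightarrow> ('v \<Rightarrow> 'v)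
                   \<Rightarrow> ('v \<Rightarrow> 'v) \<Rightarrow> int" where
  "Hc E v0 wp t g = (THE j. \<exists>k\<in>Kgrp E v0. \<exists>n\<in>Bgrp E wp. g = k \<circ> n \<circ> ipow t j)"

definition lcoset :: "('v \<Rightarrow> 'v) \<Rightarrow> ('v \<Rightarrow> 'v) set \<Rightarrow> ('v \<Rightarrow> 'v) set" where
  "lcoset g S = (\<lambda>h. g \<circ> h) ` S"

definition Mtau :: "('v \<Rightarrow> 'v) set \<Rightarrow> ('v \<Rightarrow> 'v) \<Rightarrow> ('v \<Rightarrow> 'v) set" where
  "Mtau M t = {m \<circ> ipow t j | m j. m \<in> M}"

definition qtop :: "'a topology \<Rightarrow> ('a \<Rightarrow> 'b) \<Rightarrow> 'b topology" where
  "qtop X p = topology (\<lambda>U. U \<subseteq> p ` topspace X \<and> openin X {x \<in> topspace X. p x \<in> U})"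

definition Cc_lc :: "'a topology \<Rightarrow> ('a \<Rightarrow> complex) set" where
  "Cc_lc X = {F. (\<forall>x\<in>topspace X. \<exists>U. openin X U \<and> x \<in> U \<and> (\<forall>y\<in>U. F y = F x)) \<and>
                 compactin X (X closure_of {x \<in> topspace X. F x \<noteq> 0})}"

definition dsw :: "nat \<Rightarrow> ('v \<Rightarrow> 'v \<Rightarrow> bool) \<Rightarrow> 'v \<Rightarrow> (nat \<Rightarrow> 'v) set \<Rightarrow> ('v \<Rightarrow> 'v)
                    \<Rightarrow> ('v \<Rightarrow> 'v) \<Rightarrow> complex \<Rightarrow> complex \<Rightarrow> ('v \<Rightarrow> 'v) \<Rightarrow> complex" where
  "dsw q E v0 wp t rr s s' g =
     (of_nat q) powr ((1/2 + \<i> * s) * of_int (Hc E v0 wp t g)) *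
     (of_nat q) powr ((1/2 + \<i> * s') * of_int (Hc E v0 wp t (g \<circ> rr)))"

text \<open>f is a function on G/M, i.e. on the cosets gM.\<close>
definition radon :: "nat \<Rightarrow> ('v \<Rightarrow> 'v \<Rightarrow> bool) \<Rightarrow> 'v \<Rightarrow> (nat \<Rightarrow> 'v) set \<Rightarrow> (nat \<Rightarrow> 'v) set
                     \<Rightarrow> ('v \<Rightarrow> 'v) \<Rightarrow> ('v \<Rightarrow> 'v) \<Rightarrow> complex \<Rightarrow> complex
                     \<Rightarrow> (('v \<Rightarrow> 'v) set \<Rightarrow> complex) \<Rightarrow> ('v \<Rightarrow> 'v) \<Rightarrow> complex" where
  "radon q E v0 wm wp t rr s s' f g =
     (\<Sum>\<^sub>\<infinity>j\<in>(UNIV::int set). f (lcoset (g \<circ> ipow t j) (Mgrp E v0 wm wp)) *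
                   dsw q E v0 wp t rr s (- cnj s') (g \<circ> ipow t j))"

end

theory Submission
  imports Defs
begin


lemma rt_sym: "regular_tree q E \<Longrightarrow> E x y \<Longrightarrow> E y x"
  unfolding regular_tree_def by blast
lemma rt_irr: "regular_tree q E \<Longrightarrow> \<not> E x x"
  unfolding regular_tree_def by blast
lemma rt_conn: "regular_tree q E \<Longrightarrow> E\<^sup>*\<^sup>* x y"
  unfolding regular_tree_def by blast
lemma rt_nocyc: "regular_tree q E \<Longrightarrow> \<not> is_cycle E p n"
  unfolding regular_tree_def by blast

lemma nb_walk_distinct:
  assumes T: "regular_tree q E"
  shows "\<lbrakk>\<forall>i<n. E (p i) (p (Suc i)); \<forall>i. i+2 \<le> n \<longrightarrow> p i \<noteq> p (i+2); n \<ge> 1\<rbrakk> \<Longrightarrow> p 0 \<noteq> p n"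
proof (induction n arbitrary: p rule: less_induct)
  case (less n)
  show ?case
  proof
    assume eq: "p 0 = p n"
    show False
    proof (cases "\<exists>i j. i < j \<and> j \<le> n \<and> j - i < n \<and> p i = p j")
      case True
      then obtain i j where ij: "i<j" "j \<le> n" "j - i < n" "p i = p j" by blast
      have "(\<lambda>k. p (k+i)) 0 \<noteq> (\<lambda>k. p (k+i)) (j-i)"
      proof (rule less.IH[of "j-i"])
        show "\<forall>k<j - i. E (p (k + i)) (p (Suc k + i))" using ij less.prems(1) by auto
        show "\<forall>k. k + 2 \<le> j - i \<longrightarrow> p (k + i) \<noteq> p (k + 2 + i)"
        proof (intro allI impI)
          fix k assume "k + 2 \<le> j - i"
          then have "(k+i)+2 \<le> n" using ij by linarith
          then have "p (k+i) \<noteq> p ((k+i)+2)" using less.prems(2) by blast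
          then show "p (k + i) \<noteq> p (k + 2 + i)" by (simp add: ac_simps)
        qed
      qed (use ij in auto)
      then show False using ij by simp
    next
      case False
      have inj: "inj_on p {0..<n}"
      proof (rule inj_onI)
        fix x y assume xy: "x \<in> {0..<n}" "y \<in> {0..<n}" "p x = p y"
        show "x = y"
        proof (rule ccontr)
          assume "x \<noteq> y"
          then consider "x < y" | "y < x" by linarith
          then show False using False xy by (cases; fastforce)
        qed
      qed
      consider "n = 1" | "n = 2" | "n \<ge> 3" using less.prems(3) by linarith
      then show False
      proof cases
        case 1 then show False using less.prems(1) eq rt_irr[OF T] by (metis One_nat_def lessI)
      next
        case 2
        have "p 0 \<noteq> p (0+2)" using less.prems(2)[rule_format, of 0] 2 by simp
        then show False using eq 2 by (simp add: numeral_2_eq_2)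
      next
        case 3
        have "is_cycle E p n" unfolding is_cycle_def using 3 eq inj less.prems(1) by auto
        then show False using rt_nocyc[OF T] by blast
      qed
    qed
  qed
qed


lemma ray_unique:
  assumes T: "regular_tree q E" and nb: "nb_chain E r" "nb_chain E r'" and st: "r 0 = r' 0"
    and eqv: "chain_equiv r r'"
  shows "r = r'"
proof -
  have Er: "\<And>i. E (r i) (r (Suc i))" "\<And>i. r i \<noteq> r (Suc (Suc i))"
    and Er': "\<And>i. E (r' i) (r' (Suc i))" "\<And>i. r' i \<noteq> r' (Suc (Suc i))"
    using nb unfolding nb_chain_def by auto
  have main: "\<forall>k l. k + l = s \<longrightarrow> (\<forall>n. r (n+k) = r' (n+l)) \<longrightarrow> r = r'" for s
  proof (induction s rule: less_induct)
    case (less s)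
    show ?case
    proof (intro allI impI)
      fix k l assume kl: "k + l = s" and h: "\<forall>n. r (n+k) = r' (n+l)"
      consider "k = 0" | "l = 0" | "k > 0 \<and> l > 0" by blast
      then show "r = r'"
      proof cases
        case 1
        show ?thesis
        proof (cases "l = 0")
          case True then show ?thesis using h 1 by auto
        next
          case False
          have "r' 0 \<noteq> r' l"
            by (rule nb_walk_distinct[OF T]) (use Er' False in auto)
          moreover have "r' l = r 0" using h[rule_format, of 0] 1 by simp
          ultimately show ?thesis using st by simp
        qed
      next
        case 2
        show ?thesis
        proof (cases "k = 0")
          case True then show ?thesis using h 2 by auto
        next
          case False
          have "r 0 \<noteq> r k"
            by (rule nb_walk_distinct[OF T]) (use Er False in auto)
          moreover have "r k = r' 0" using h[rule_format, of 0] 2 by simp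
          ultimately show ?thesis using st by simp
        qed
      next
        case 3
        show ?thesis
        proof (cases "r (k-1) = r' (l-1)")
          case True
          have "\<forall>n. r (n+(k-1)) = r' (n+(l-1))"
          proof
            fix n show "r (n+(k-1)) = r' (n+(l-1))"
            proof (cases n)
              case 0 then show ?thesis using True by simp
            next
              case (Suc m)
              then have "n + (k-1) = m + k" "n + (l-1) = m + l" using 3 by auto
              then show ?thesis using h by simp
            qed
          qed
          moreover have "(k-1)+(l-1) < s" using kl 3 by simp
          ultimately show ?thesis using less.IH by blast
        next
          case False
          define W where "W i = (if i \<le> k then r i else r' (k+l-i))" for i
          have hk: "r k = r' l" using h[rule_format, of 0] by simp
          have Wge: "W i = r' (k+l-i)" if "k \<le> i" "i \<le> k+l" for i
            using that hk unfolding W_def by (cases "i = k") auto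
          have "W 0 \<noteq> W (k+l)"
          proof (rule nb_walk_distinct[OF T])
            show "\<forall>i<k + l. E (W i) (W (Suc i))"
            proof (intro allI impI)
              fix i assume i: "i < k + l"
              show "E (W i) (W (Suc i))"
              proof (cases "i < k")
                case True then show ?thesis unfolding W_def using Er by auto
              next
                case False
                obtain j where j: "k + l - i = Suc j" using i by (metis Suc_diff_Suc)
                have "k + l - Suc i = j" using j by simp
                then have "W i = r' (Suc j)" "W (Suc i) = r' j"
                  using Wge[of i] Wge[of "Suc i"] False i j by auto
                then show ?thesis using Er'(1)[of j] rt_sym[OF T] by metis
              qed
            qed
            show "\<forall>i. i + 2 \<le> k + l \<longrightarrow> W i \<noteq> W (i + 2)"
            proof (intro allI impI)
              fix i assume i: "i + 2 \<le> k + l"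
              consider "i + 2 \<le> k" | "i + 1 = k" | "k \<le> i" by linarith
              then show "W i \<noteq> W (i + 2)"
              proof cases
                case 1 then show ?thesis unfolding W_def using Er(2)[of i] by auto
              next
                case 2
                have "W i = r (k-1)" unfolding W_def using 2 by auto
                moreover have "W (i+2) = r' (l-1)" using Wge[of "i+2"] 2 i by auto
                ultimately show ?thesis using False by simp
              next
                case 3
                obtain j where j: "k + l - i = j + 2" using i 3 by (metis add.commute le_add_diff_inverse2 le_diff_conv2 add_le_imp_le_diff)
                have jj: "k + l - (i+2) = j" using j by linarith
                have "W i = r' (j+2)" "W (i+2) = r' j" using Wge[of i] Wge[of "i+2"] 3 i j jj by auto
                then show ?thesis using Er'(2)[of j] by (simp add: numeral_2_eq_2)
              qed
            qed
            show "1 \<le> k + l" using 3 by simp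
          qed
          moreover have "W 0 = r 0" unfolding W_def by simp
          moreover have "W (k+l) = r' 0" using Wge[of "k+l"] by simp
          ultimately show ?thesis using st by simp
        qed
      qed
    qed
  qed
  obtain k l where "\<forall>n. r (n+k) = r' (n+l)" using eqv unfolding chain_equiv_def by blast
  then show ?thesis using main by blast
qed

lemma chain_equiv_refl: "chain_equiv r r"
  unfolding chain_equiv_def by blast

lemma chain_equiv_sym: "chain_equiv r r' \<Longrightarrow> chain_equiv r' r"
  unfolding chain_equiv_def by metis

lemma chain_equiv_trans:
  assumes "chain_equiv a b" "chain_equiv b c" shows "chain_equiv a c"
proof -
  obtain k l where h1: "\<forall>n. a (n+k) = b (n+l)" using assms(1) unfolding chain_equiv_def by blast
  obtain k' l' where h2: "\<forall>n. b (n+k') = c (n+l')" using assms(2) unfolding chain_equiv_def by blast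
  have "\<forall>n. a (n+(k+k')) = c (n+(l+l'))"
  proof
    fix n
    have "a (n+(k+k')) = a ((n+k')+k)" by (simp add: ac_simps)
    also have "\<dots> = b ((n+k')+l)" using h1 by blast
    also have "\<dots> = b ((n+l)+k')" by (simp add: ac_simps)
    also have "\<dots> = c ((n+l)+l')" using h2 by blast
    also have "\<dots> = c (n+(l+l'))" by (simp add: ac_simps)
    finally show "a (n+(k+k')) = c (n+(l+l'))" .
  qed
  then show ?thesis unfolding chain_equiv_def by blast
qed

lemma chain_equiv_shift: "chain_equiv r (\<lambda>i. r (i+n))"
  unfolding chain_equiv_def by (rule exI[of _ n], rule exI[of _ 0]) simp

lemma chain_equiv_comp: "chain_equiv r r' \<Longrightarrow> chain_equiv (g \<circ> r) (g \<circ> r')"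
  unfolding chain_equiv_def comp_def by metis

lemma nb_shift: "nb_chain E r \<Longrightarrow> nb_chain E (\<lambda>i. r (i+n))"
  unfolding nb_chain_def by simp

lemma Aut_bij: "g \<in> Aut E \<Longrightarrow> bij g" unfolding Aut_def by blast
lemma Aut_E: "g \<in> Aut E \<Longrightarrow> E x y \<longleftrightarrow> E (g x) (g y)" unfolding Aut_def by blast
lemma Aut_inj: "g \<in> Aut E \<Longrightarrow> inj g" using Aut_bij bij_is_inj by blast
lemma Aut_id: "id \<in> Aut E" unfolding Aut_def by simp
lemma Aut_comp: "f \<in> Aut E \<Longrightarrow> g \<in> Aut E \<Longrightarrow> f \<circ> g \<in> Aut E"
  unfolding Aut_def using bij_comp by fastforce
lemma Aut_inv_l: "g \<in> Aut E \<Longrightarrow> inv g \<circ> g = id"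
  using Aut_inj by (metis inv_o_cancel)
lemma Aut_inv_r: "g \<in> Aut E \<Longrightarrow> g \<circ> inv g = id"
  using Aut_bij by (metis bij_is_surj surj_iff)
lemma Aut_inv_l': "g \<in> Aut E \<Longrightarrow> inv g (g x) = x"
  using Aut_inj by (metis inv_f_f)
lemma Aut_inv_r': "g \<in> Aut E \<Longrightarrow> g (inv g x) = x"
  using Aut_bij by (metis bij_inv_eq_iff)
lemma Aut_inv: "g \<in> Aut E \<Longrightarrow> inv g \<in> Aut E"
proof -
  assume g: "g \<in> Aut E"
  have "bij (inv g)" using Aut_bij[OF g] bij_imp_bij_inv by blast
  moreover have "E x y \<longleftrightarrow> E (inv g x) (inv g y)" for x y
    using Aut_E[OF g, of "inv g x" "inv g y"] Aut_inv_r'[OF g] by simp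
  ultimately show ?thesis unfolding Aut_def by blast
qed

lemma nb_comp: "g \<in> Aut E \<Longrightarrow> nb_chain E r \<Longrightarrow> nb_chain E (g \<circ> r)"
  unfolding nb_chain_def using Aut_E Aut_inj by (metis comp_apply injD)

lemma ends_class: "\<omega> \<in> ends E \<Longrightarrow> r \<in> \<omega> \<Longrightarrow> \<omega> = {r'. nb_chain E r' \<and> chain_equiv r r'}"
  unfolding ends_def using chain_equiv_trans chain_equiv_sym by blast

lemma ends_nb: "\<omega> \<in> ends E \<Longrightarrow> r \<in> \<omega> \<Longrightarrow> nb_chain E r"
  unfolding ends_def by blast

lemma ends_ne: "\<omega> \<in> ends E \<Longrightarrow> \<exists>r. r \<in> \<omega>"
  unfolding ends_def using chain_equiv_refl by blast

lemma ends_mem: "\<omega> \<in> ends E \<Longrightarrow> r \<in> \<omega> \<Longrightarrow> nb_chain E r' \<Longrightarrow> chain_equiv r r' \<Longrightarrow> r' \<in> \<omega>"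
  using ends_class by blast

lemma ends_equiv: "\<omega> \<in> ends E \<Longrightarrow> r \<in> \<omega> \<Longrightarrow> r' \<in> \<omega> \<Longrightarrow> chain_equiv r r'"
  using ends_class by blast

lemma ends_shift: "\<omega> \<in> ends E \<Longrightarrow> r \<in> \<omega> \<Longrightarrow> (\<lambda>i. r (i+n)) \<in> \<omega>"
  using ends_mem ends_nb nb_shift chain_equiv_shift by metis

lemma ends_unique: "regular_tree q E \<Longrightarrow> \<omega> \<in> ends E \<Longrightarrow> r \<in> \<omega> \<Longrightarrow> r' \<in> \<omega> \<Longrightarrow> r 0 = r' 0 \<Longrightarrow> r = r'"
  using ray_unique ends_nb ends_equiv by metis

lemma end_act_comp: "end_act f (end_act g \<omega>) = end_act (f \<circ> g) \<omega>"
  unfolding end_act_def by (simp add: image_image comp_assoc)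

lemma end_act_id: "end_act id \<omega> = \<omega>"
  unfolding end_act_def by simp

lemma end_act_class:
  assumes g: "g \<in> Aut E" and w: "\<omega> \<in> ends E" and r: "r \<in> \<omega>"
  shows "end_act g \<omega> = {r'. nb_chain E r' \<and> chain_equiv (g \<circ> r) r'}"
proof
  show "end_act g \<omega> \<subseteq> {r'. nb_chain E r' \<and> chain_equiv (g \<circ> r) r'}"
    unfolding end_act_def using g w r ends_nb nb_comp ends_equiv chain_equiv_comp by blast
  show "{r'. nb_chain E r' \<and> chain_equiv (g \<circ> r) r'} \<subseteq> end_act g \<omega>"
  proof
    fix r' assume h: "r' \<in> {r'. nb_chain E r' \<and> chain_equiv (g \<circ> r) r'}"
    have "nb_chain E (inv g \<circ> r')" using h nb_comp Aut_inv g by blast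
    moreover have "chain_equiv r (inv g \<circ> r')"
    proof -
      have "inv g \<circ> (g \<circ> r) = r" using Aut_inv_l[OF g] by (metis comp_assoc id_comp)
      then show ?thesis using chain_equiv_comp[of "g \<circ> r" r' "inv g"] h by simp
    qed
    ultimately have "inv g \<circ> r' \<in> \<omega>" using ends_mem w r by blast
    moreover have "r' = g \<circ> (inv g \<circ> r')" using Aut_inv_r[OF g] by (simp add: comp_assoc[symmetric])
    ultimately show "r' \<in> end_act g \<omega>" unfolding end_act_def by blast
  qed
qed

lemma end_act_eqI:
  assumes "g \<in> Aut E" "\<omega> \<in> ends E" "\<omega>' \<in> ends E" "r \<in> \<omega>" "g \<circ> r \<in> \<omega>'"
  shows "end_act g \<omega> = \<omega>'"
  using end_act_class[OF assms(1,2,4)] ends_class[OF assms(3,5)] by simp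

lemma end_act_inv: "g \<in> Aut E \<Longrightarrow> end_act g \<omega> = \<omega> \<Longrightarrow> end_act (inv g) \<omega> = \<omega>"
  by (metis Aut_inv_l end_act_comp end_act_id)

lemma on_geod_sym: "on_geod a b x \<Longrightarrow> on_geod b a x"
  unfolding on_geod_def by metis

lemma on_geod_act: "inj g \<Longrightarrow> on_geod a b x \<Longrightarrow> on_geod (end_act g a) (end_act g b) (g x)"
  unfolding on_geod_def end_act_def by (auto dest: injD) (metis comp_apply injD image_eqI)




lemma walk_exists:
  "E\<^sup>*\<^sup>* x z \<Longrightarrow> \<exists>p n. p 0 = x \<and> p n = z \<and> (\<forall>i<n. E (p i) (p (Suc i)))"
proof (induction rule: rtranclp_induct)
  case base
  show ?case by (rule exI[of _ "\<lambda>_. x"], rule exI[of _ 0]) simp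
next
  case (step y z)
  then obtain p n where p: "p 0 = x" "p n = y" "\<forall>i<n. E (p i) (p (Suc i))" by blast
  define p' where "p' = p(Suc n := z)"
  have "p' 0 = x" "p' (Suc n) = z" using p unfolding p'_def by auto
  moreover have "\<forall>i<Suc n. E (p' i) (p' (Suc i))"
  proof (intro allI impI)
    fix i assume "i < Suc n"
    then consider "i < n" | "i = n" by linarith
    then show "E (p' i) (p' (Suc i))"
      by cases (use p step.hyps(2) in \<open>auto simp: p'_def\<close>)
  qed
  ultimately show ?case by blast
qed

lemma ipow_pos: "ipow t (int n) = t ^^ n"
  unfolding ipow_def by simp

lemma ipow_neg: "ipow t (- int n) = inv t ^^ n"
  unfolding ipow_def by (cases "n = 0") auto

lemma ipow_0: "ipow t 0 = id"
  unfolding ipow_def by simp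

lemma funpow_Aut: "f \<in> Aut E \<Longrightarrow> f ^^ n \<in> Aut E"
  by (induction n) (auto simp: Aut_id Aut_comp)

lemma ipow_Aut: "t \<in> Aut E \<Longrightarrow> ipow t j \<in> Aut E"
  unfolding ipow_def by (simp add: funpow_Aut Aut_inv)

lemma funpow_end: "f \<in> Aut E \<Longrightarrow> end_act f w = w \<Longrightarrow> end_act (f ^^ n) w = w"
proof (induction n)
  case 0 show ?case by (simp only: funpow.simps(1) end_act_id)
next
  case (Suc n)
  have "end_act (f ^^ Suc n) w = end_act f (end_act (f^^n) w)" by (simp only: funpow.simps(2) end_act_comp)
  also have "\<dots> = w" using Suc by simp
  finally show ?case .
qed

lemma ipow_end: "t \<in> Aut E \<Longrightarrow> end_act t w = w \<Longrightarrow> end_act (ipow t j) w = w"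
proof -
  assume a: "t \<in> Aut E" "end_act t w = w"
  have "end_act (t ^^ n) w = w" for n using funpow_end[OF a] .
  moreover have "end_act (inv t ^^ n) w = w" for n using funpow_end[OF Aut_inv[OF a(1)] end_act_inv[OF a]] .
  ultimately show ?thesis unfolding ipow_def by simp
qed

lemma ipow_succ:
  assumes t: "t \<in> Aut E"
  shows "ipow t (j+1) = t \<circ> ipow t j \<and> ipow t (j+1) = ipow t j \<circ> t"
proof (cases "j \<ge> 0")
  case True
  then obtain n where n: "j = int n" by (metis nonneg_eq_int)
  have e: "ipow t (j+1) = t ^^ Suc n" by (metis n of_nat_Suc add.commute ipow_pos)
  have "t ^^ Suc n = t \<circ> t ^^ n" by (rule funpow.simps(2))
  moreover have "t ^^ Suc n = t ^^ n \<circ> t" by (rule funpow_Suc_right)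
  ultimately show ?thesis using e n ipow_pos by metis
next
  case False
  define n where "n = nat (-j) - 1"
  have jn: "j = - int (Suc n)" using False unfolding n_def by simp
  have j1: "j + 1 = - int n" using jn by simp
  have a: "ipow t j = inv t \<circ> inv t ^^ n" using jn ipow_neg[of t "Suc n"] by simp
  have b: "ipow t j = inv t ^^ n \<circ> inv t" using jn ipow_neg[of t "Suc n"] by (simp add: funpow_Suc_right del: funpow.simps)
  have "t \<circ> ipow t j = inv t ^^ n" unfolding a using Aut_inv_r[OF t] by (metis comp_assoc id_comp)
  moreover have "ipow t j \<circ> t = inv t ^^ n" unfolding b using Aut_inv_l[OF t] by (metis comp_assoc comp_id)
  ultimately show ?thesis using j1 ipow_neg[of t n] by simp
qed

lemma ipow_pred:
  assumes t: "t \<in> Aut E"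
  shows "ipow t (j-1) = ipow t j \<circ> inv t"
proof -
  have "ipow t (j-1+1) = ipow t (j-1) \<circ> t" using ipow_succ[OF t] by blast
  then have "ipow t j = ipow t (j-1) \<circ> t" by simp
  then show ?thesis using Aut_inv_r[OF t] by (metis comp_assoc comp_id)
qed

lemma ipow_add:
  assumes t: "t \<in> Aut E"
  shows "ipow t (a+b) = ipow t a \<circ> ipow t b"
proof (induction b rule: int_induct[where k=0])
  case base then show ?case by (simp add: ipow_0)
next
  case (step1 i)
  have "ipow t (a + (i+1)) = ipow t ((a+i)+1)" by (simp add: ac_simps)
  also have "\<dots> = ipow t (a+i) \<circ> t" using ipow_succ[OF t] by blast
  also have "\<dots> = (ipow t a \<circ> ipow t i) \<circ> t" using step1 by (simp only:)
  also have "\<dots> = ipow t a \<circ> (ipow t i \<circ> t)" by (rule comp_assoc)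
  also have "\<dots> = ipow t a \<circ> ipow t (i+1)" using ipow_succ[OF t] by metis
  finally show ?case .
next
  case (step2 i)
  have "ipow t (a + (i-1)) = ipow t ((a+i)-1)" by (simp add: algebra_simps)
  also have "\<dots> = ipow t (a+i) \<circ> inv t" using ipow_pred[OF t] by blast
  also have "\<dots> = (ipow t a \<circ> ipow t i) \<circ> inv t" using step2 by (simp only:)
  also have "\<dots> = ipow t a \<circ> (ipow t i \<circ> inv t)" by (rule comp_assoc)
  also have "\<dots> = ipow t a \<circ> ipow t (i-1)" using ipow_pred[OF t] by metis
  finally show ?case .
qed

lemma ipow_cancel:
  assumes t: "t \<in> Aut E"
  shows "ipow t j (ipow t (-j) x) = x" "ipow t (-j) (ipow t j x) = x"
  using ipow_add[OF t, of j "-j"] ipow_add[OF t, of "-j" j] ipow_0[of t]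
  by (metis comp_apply id_apply add.right_inverse add.left_inverse)+

lemma Hc_local_aux:
  assumes g: "g \<in> Aut E" and g': "g' \<in> Aut E" and w: "g w = v0" "g' w = v0"
    and k: "k \<in> Kgrp E v0" and eq: "g = k \<circ> n \<circ> ipow t j"
  shows "\<exists>k'\<in>Kgrp E v0. g' = k' \<circ> n \<circ> ipow t j"
proof (intro bexI)
  show "g' = (g' \<circ> inv g \<circ> k) \<circ> n \<circ> ipow t j"
  proof -
    have "(g' \<circ> inv g \<circ> k) \<circ> n \<circ> ipow t j = g' \<circ> inv g \<circ> g" unfolding eq by (simp add: comp_assoc)
    also have "\<dots> = g'" using Aut_inv_l[OF g] by (simp add: comp_assoc)
    finally show ?thesis by simp
  qed
  have "inv g v0 = w" using w(1) Aut_inv_l'[OF g] by metis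
  then show "g' \<circ> inv g \<circ> k \<in> Kgrp E v0"
    using k g g' w unfolding Kgrp_def by (auto intro!: Aut_comp Aut_inv)
qed

lemma Hc_local:
  assumes g: "g \<in> Aut E" and g': "g' \<in> Aut E" and w: "g w = v0" "g' w = v0"
  shows "Hc E v0 wp t g' = Hc E v0 wp t g"
proof -
  have "(\<exists>k\<in>Kgrp E v0. \<exists>n\<in>Bgrp E wp. g' = k \<circ> n \<circ> ipow t j) \<longleftrightarrow>
        (\<exists>k\<in>Kgrp E v0. \<exists>n\<in>Bgrp E wp. g = k \<circ> n \<circ> ipow t j)" for j
    using Hc_local_aux[OF g g' w] Hc_local_aux[OF g' g w(2,1)] by meson
  then show ?thesis unfolding Hc_def by simp
qed

locale tset =
  fixes E :: "'v \<Rightarrow> 'v \<Rightarrow> bool" and q :: nat and v0 :: 'v and wm wp :: "(nat \<Rightarrow> 'v) set"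
    and t rr :: "'v \<Rightarrow> 'v" and r1 r2 :: "nat \<Rightarrow> 'v"
  assumes tree: "regular_tree q E"
    and wm: "wm \<in> ends E" and wp: "wp \<in> ends E"
    and t_aut: "t \<in> Aut E" and t_fix: "end_act t wm = wm" "end_act t wp = wp"
    and t_transl: "\<And>x. on_geod wm wp x \<Longrightarrow> (\<exists>r\<in>wp. r 0 = x \<and> t x = r 1)"
    and rr_K: "rr \<in> Kgrp E v0" and rr_inv: "rr \<circ> rr = id"
    and rr_conj: "\<And>j. rr \<circ> ipow t j \<circ> inv rr = ipow t (- j)"
    and r1: "r1 \<in> wm" "r1 0 = v0" and r2: "r2 \<in> wp" "r2 0 = v0" and r12: "r1 1 \<noteq> r2 1"
begin

lemma r1nb: "E (r1 i) (r1 (Suc i))" "r1 i \<noteq> r1 (Suc (Suc i))"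
  using ends_nb[OF wm r1(1)] unfolding nb_chain_def by auto
lemma r2nb: "E (r2 i) (r2 (Suc i))" "r2 i \<noteq> r2 (Suc (Suc i))"
  using ends_nb[OF wp r2(1)] unfolding nb_chain_def by auto

lemma geod_r2: "on_geod wm wp (r2 n)"
proof (cases "n = 0")
  case True then show ?thesis using r1 r2 r12 unfolding on_geod_def by (metis One_nat_def)
next
  case False
  define a where "a i = (if i \<le> n then r2 (n - i) else r1 (i - n))" for i
  have "nb_chain E a" unfolding nb_chain_def
  proof (intro conjI allI)
    fix i
    show "E (a i) (a (Suc i))"
    proof (cases "i < n")
      case True
      define j where "j = n - Suc i"
      have j: "n - i = Suc j" "n - Suc i = j" using True unfolding j_def by linarith+
      then show ?thesis unfolding a_def using True r2nb(1)[of j] rt_sym[OF tree] by auto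
    next
      case False
      then show ?thesis unfolding a_def using r1nb(1)[of "i-n"] r1(2) r2(2)
        by (cases "i = n") (auto simp: Suc_diff_le)
    qed
    show "a i \<noteq> a (Suc (Suc i))"
    proof -
      consider "Suc (Suc i) \<le> n" | "Suc i = n" | "n \<le> i" by linarith
      then show ?thesis
      proof cases
        case 1
        define j where "j = n - Suc (Suc i)"
        have j: "n - Suc (Suc i) = j" "n - i = Suc (Suc j)" using 1 unfolding j_def by linarith+
        then show ?thesis unfolding a_def using 1 r2nb(2)[of j] by auto
      next
        case 2 then show ?thesis unfolding a_def using r12 by auto
      next
        case 3 then show ?thesis unfolding a_def using r1nb(2)[of "i-n"] r1(2) r2(2) r1nb(2)[of 0] by (auto simp: Suc_diff_le)
      qed
    qed
  qed
  moreover have "chain_equiv r1 a" unfolding chain_equiv_def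
    by (rule exI[of _ 0], rule exI[of _ n]) (auto simp: a_def r1 r2)
  ultimately have "a \<in> wm" using ends_mem[OF wm r1(1)] by blast
  moreover have "(\<lambda>i. r2 (i+n)) \<in> wp" using ends_shift[OF wp r2(1)] .
  moreover have "a 1 \<noteq> r2 (1 + n)"
  proof -
    obtain j where "n = Suc j" using False by (metis not0_implies_Suc)
    then show ?thesis unfolding a_def using r2nb(2)[of j] by auto
  qed
  ultimately show ?thesis unfolding on_geod_def by (rule_tac x=a in bexI, rule_tac x="\<lambda>i. r2 (i+n)" in bexI) (auto simp: a_def)
qed

lemma t_r2: "t (r2 n) = r2 (Suc n)"
proof -
  obtain r where r: "r \<in> wp" "r 0 = r2 n" "t (r2 n) = r 1" using t_transl[OF geod_r2] by blast
  have "r = (\<lambda>i. r2 (i+n))" using ends_unique[OF tree wp r(1) ends_shift[OF wp r2(1)]] r(2) by simp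
  then show ?thesis using r(3) by simp
qed

lemma t_r1: "t (r1 (Suc n)) = r1 n"
proof -
  define c where "c i = (if i = 0 then r2 1 else r1 (i-1))" for i
  have "nb_chain E c" unfolding nb_chain_def
  proof (intro conjI allI)
    fix i
    show "E (c i) (c (Suc i))"
      using r1nb(1)[of "i-1"] r2nb(1)[of 0] rt_sym[OF tree] r1(2) r2(2) unfolding c_def
      by (cases i) auto
    show "c i \<noteq> c (Suc (Suc i))"
      using r1nb(2)[of "i-1"] r12 unfolding c_def by (cases i) auto
  qed
  moreover have "chain_equiv r1 c" unfolding chain_equiv_def
    by (rule exI[of _ 0], rule exI[of _ 1]) (auto simp: c_def)
  ultimately have c: "c \<in> wm" using ends_mem[OF wm r1(1)] by blast
  have "t \<circ> r1 \<in> wm" using t_fix(1) r1(1) unfolding end_act_def by blast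
  moreover have "(t \<circ> r1) 0 = c 0" using t_r2[of 0] r1(2) r2(2) by (simp add: c_def)
  ultimately have "t \<circ> r1 = c" using ends_unique[OF tree wm _ c] by blast
  then have "(t \<circ> r1) (Suc n) = c (Suc n)" by simp
  then show ?thesis by (simp add: c_def)
qed

lemma pow_v0_pos: "(t ^^ n) v0 = r2 n"
  by (induction n) (auto simp: r2 t_r2)

lemma inv_t_r1: "inv t (r1 n) = r1 (Suc n)"
  using t_r1[of n] Aut_inv_l'[OF t_aut] by metis

lemma pow_v0_neg: "(inv t ^^ n) v0 = r1 n"
  by (induction n) (auto simp: r1 inv_t_r1)

lemma ipow_v0_pos: "ipow t (int n) v0 = r2 n"
  using pow_v0_pos ipow_pos by metis
lemma ipow_v0_neg: "ipow t (- int n) v0 = r1 n"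
  using pow_v0_neg ipow_neg by metis

lemma ipow_v0_ne: "d \<noteq> 0 \<Longrightarrow> ipow t d v0 \<noteq> v0"
proof -
  assume d: "d \<noteq> 0"
  show ?thesis
  proof (cases "d > 0")
    case True
    then obtain n where n: "d = int n" "n > 0" using zero_less_imp_eq_int by blast
    have "r2 0 \<noteq> r2 n" by (rule nb_walk_distinct[OF tree]) (use r2nb n in auto)
    then show ?thesis using ipow_v0_pos[of n] n r2(2) by simp
  next
    case False
    then have "- d > 0" using d by simp
    then obtain n where n: "- d = int n" "n > 0" using zero_less_imp_eq_int by blast
    then have n: "d = - int n" "n > 0" by simp_all
    have "r1 0 \<noteq> r1 n" by (rule nb_walk_distinct[OF tree]) (use r1nb n in auto)
    then show ?thesis using ipow_v0_neg[of n] n r1(2) by simp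
  qed
qed

lemma ipow_v0_inj: "ipow t i v0 = ipow t j v0 \<Longrightarrow> i = j"
proof (rule ccontr)
  assume h: "ipow t i v0 = ipow t j v0" and ne: "i \<noteq> j"
  have "ipow t (-i + j) v0 = ipow t (-i) (ipow t j v0)" using ipow_add[OF t_aut, of "-i" j] by simp
  also have "\<dots> = ipow t (-i) (ipow t i v0)" using h by simp
  also have "\<dots> = v0" using ipow_cancel[OF t_aut] by simp
  finally show False using ipow_v0_ne[of "-i+j"] ne by simp
qed

lemma ipow_geod: "on_geod wm wp x \<Longrightarrow> on_geod wm wp (ipow t j x)"
proof -
  assume "on_geod wm wp x"
  then have "on_geod (end_act (ipow t j) wm) (end_act (ipow t j) wp) (ipow t j x)"
    by (rule on_geod_act[OF Aut_inj[OF ipow_Aut[OF t_aut]]])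
  then show ?thesis by (simp only: ipow_end[OF t_aut t_fix(1)] ipow_end[OF t_aut t_fix(2)])
qed

lemma rr_Aut: "rr \<in> Aut E" and rr_v0: "rr v0 = v0"
  using rr_K unfolding Kgrp_def by auto

lemma inv_rr: "inv rr = rr"
  using inv_unique_comp[OF rr_inv rr_inv] .

lemma rr_r2: "rr (r2 n) = r1 n"
proof -
  have "rr (r2 n) = (rr \<circ> ipow t (int n) \<circ> inv rr) v0"
    using ipow_v0_pos[of n] inv_rr rr_v0 by simp
  also have "\<dots> = ipow t (- int n) v0" by (simp only: rr_conj)
  also have "\<dots> = r1 n" by (rule ipow_v0_neg)
  finally show ?thesis .
qed

lemma rr_wp: "end_act rr wp = wm"
  by (rule end_act_eqI[OF rr_Aut wp wm r2(1)]) (use rr_r2 r1(1) in \<open>simp add: comp_def\<close>)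

lemma rr_wm: "end_act rr wm = wp"
proof -
  have "end_act rr wm = end_act rr (end_act rr wp)" by (simp only: rr_wp)
  also have "\<dots> = wp" by (simp only: end_act_comp rr_inv end_act_id)
  finally show ?thesis .
qed

lemma rr_geod: "on_geod wm wp x \<Longrightarrow> on_geod wm wp (rr x)"
proof -
  assume "on_geod wm wp x"
  then have "on_geod (end_act rr wm) (end_act rr wp) (rr x)" by (rule on_geod_act[OF Aut_inj[OF rr_Aut]])
  then show ?thesis using on_geod_sym by (simp only: rr_wp rr_wm)
qed

end




context tset begin

lemma ray_from: "\<exists>r\<in>wp. r 0 = y \<and> (\<exists>N i. r N = r2 i)"
proof -
  define P where "P n \<longleftrightarrow> (\<exists>p i. p 0 = y \<and> p n = r2 i \<and> (\<forall>k<n. E (p k) (p (Suc k))))" for n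
  obtain p0 n0 where "p0 0 = y" "p0 n0 = r2 0" "\<forall>i<n0. E (p0 i) (p0 (Suc i))"
    using walk_exists[OF rt_conn[OF tree]] by blast
  then have "P n0" unfolding P_def by blast
  define m where "m = (LEAST n. P n)"
  have Pm: "P m" using LeastI[of P n0] \<open>P n0\<close> m_def by simp
  have minm: "\<And>n. P n \<Longrightarrow> m \<le> n" using Least_le m_def by metis
  obtain p i where p: "p 0 = y" "p m = r2 i" "\<forall>k<m. E (p k) (p (Suc k))" using Pm P_def by blast
  have nbp: "p k \<noteq> p (k+2)" if kk: "k+2 \<le> m" for k
  proof
    assume eq: "p k = p (k+2)"
    define p' where "p' x = (if x \<le> k then p x else p (x+2))" for x
    have "P (m-2)" unfolding P_def
    proof (intro exI conjI)
      show "p' 0 = y" using p by (simp add: p'_def)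
      show "p' (m-2) = r2 i"
      proof (cases "m - 2 \<le> k")
        case True
        then have "m = k + 2" using kk by linarith
        then show ?thesis using p eq by (simp add: p'_def)
      next
        case False
        then have "m - 2 + 2 = m" using kk by linarith
        then show ?thesis using p False by (simp add: p'_def)
      qed
      show "\<forall>x<m-2. E (p' x) (p' (Suc x))"
      proof (intro allI impI)
        fix x assume x: "x < m-2"
        consider "x < k" | "x = k" | "k < x" by linarith
        then show "E (p' x) (p' (Suc x))"
        proof cases
          case 1 then show ?thesis using p(3) x by (simp add: p'_def)
        next
          case 2
          have "E (p (k+2)) (p (Suc (k+2)))" using p(3) x 2 by simp
          then show ?thesis using 2 eq by (simp add: p'_def)
        next
          case 3
          have "E (p (x+2)) (p (Suc (x+2)))" using p(3) x by simp
          then show ?thesis using 3 by (simp add: p'_def)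
        qed
      qed
    qed
    then have "m \<le> m-2" using minm by blast
    then show False using kk by linarith
  qed
  have notin: "p (m-1) \<noteq> r2 i'" if "m \<ge> 1" for i'
  proof
    assume h: "p (m-1) = r2 i'"
    have "P (m-1)" unfolding P_def
      by (rule exI[of _ p], rule exI[of _ i']) (use p h that in auto)
    then show False using minm that by fastforce
  qed
  define r where "r x = (if x \<le> m then p x else r2 (i + (x - m)))" for x
  have rge: "r x = r2 (i + (x - m))" if "m \<le> x" for x
    using that p(2) by (cases "x = m") (auto simp: r_def)
  have "nb_chain E r" unfolding nb_chain_def
  proof (intro conjI allI)
    fix x
    show "E (r x) (r (Suc x))"
    proof (cases "x < m")
      case True then show ?thesis using p(3) by (auto simp: r_def)
    next
      case False
      then have "r x = r2 (i + (x-m))" "r (Suc x) = r2 (Suc (i + (x-m)))"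
        using rge[of x] rge[of "Suc x"] by (auto simp: Suc_diff_le)
      then show ?thesis using r2nb(1) by simp
    qed
    show "r x \<noteq> r (Suc (Suc x))"
    proof -
      consider "x + 2 \<le> m" | "x + 1 = m" | "m \<le> x" by linarith
      then show ?thesis
      proof cases
        case 1 then show ?thesis using nbp[of x] by (simp add: r_def)
      next
        case 2
        have "x = m - 1" using 2 by linarith
        then have "r x = p (m-1)" using 2 by (simp add: r_def)
        moreover have "i + (Suc (Suc x) - m) = i + 1" using 2 by linarith
        then have "r (Suc (Suc x)) = r2 (i+1)" using rge[of "Suc (Suc x)"] 2 by simp
        ultimately show ?thesis using notin[of "i+1"] 2 by simp
      next
        case 3
        have "r x = r2 (i + (x-m))" "r (Suc (Suc x)) = r2 (Suc (Suc (i + (x-m))))"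
          using rge[of x] rge[of "Suc (Suc x)"] 3 by (auto simp: Suc_diff_le)
        then show ?thesis using r2nb(2) by simp
      qed
    qed
  qed
  moreover have "chain_equiv r2 r" unfolding chain_equiv_def
    by (rule exI[of _ i], rule exI[of _ m]) (simp add: rge ac_simps)
  ultimately have "r \<in> wp" using ends_mem[OF wp r2(1)] by blast
  moreover have "r 0 = y" using p by (simp add: r_def)
  moreover have "r m = r2 i" using p by (simp add: r_def)
  ultimately show ?thesis by blast
qed

lemma fix_ray:
  assumes g: "g \<in> Aut E" and y: "g y = y" and w: "end_act g wp = wp"
  shows "\<exists>i. g (r2 i) = r2 i"
proof -
  obtain r N i where r: "r \<in> wp" "r 0 = y" "r N = r2 i" using ray_from by blast
  have "g \<circ> r \<in> end_act g wp" unfolding end_act_def using r(1) by blast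
  then have "g \<circ> r \<in> wp" using w by simp
  moreover have "(g \<circ> r) 0 = r 0" using r(2) y by simp
  ultimately have "g \<circ> r = r" using ends_unique[OF tree wp _ r(1)] by blast
  then have "g (r N) = r N" by (metis comp_apply)
  then show ?thesis using r(3) by auto
qed

abbreviation "MM \<equiv> Mgrp E v0 wm wp"

lemma geod_v0: "on_geod wm wp v0" using geod_r2[of 0] r2(2) by simp

lemma M_D: "m \<in> MM \<Longrightarrow> m \<in> Aut E"  "m \<in> MM \<Longrightarrow> m v0 = v0" "m \<in> MM \<Longrightarrow> on_geod wm wp x \<Longrightarrow> m x = x"
  unfolding Mgrp_def Kgrp_def by auto

lemma M_I: "m \<in> Aut E \<Longrightarrow> m v0 = v0 \<Longrightarrow> (\<And>x. on_geod wm wp x \<Longrightarrow> m x = x) \<Longrightarrow> m \<in> MM"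
  unfolding Mgrp_def Kgrp_def by auto

lemma M_id: "id \<in> MM" by (rule M_I) (auto simp: Aut_id)

lemma M_comp: "a \<in> MM \<Longrightarrow> b \<in> MM \<Longrightarrow> a \<circ> b \<in> MM"
  by (rule M_I) (auto simp: M_D Aut_comp)

lemma M_inv: "m \<in> MM \<Longrightarrow> inv m \<in> MM"
proof (rule M_I)
  assume m: "m \<in> MM"
  show "inv m \<in> Aut E" using Aut_inv M_D(1)[OF m] by blast
  show "inv m v0 = v0" using M_D(2)[OF m] Aut_inv_l'[OF M_D(1)[OF m]] by metis
  fix x assume "on_geod wm wp x"
  then show "inv m x = x" using M_D(3)[OF m] Aut_inv_l'[OF M_D(1)[OF m]] by metis
qed

lemma M_wp: "m \<in> MM \<Longrightarrow> end_act m wp = wp"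
proof -
  assume m: "m \<in> MM"
  have "m \<circ> r2 = r2" using M_D(3)[OF m geod_r2] by (simp add: comp_def)
  then show ?thesis using end_act_eqI[OF M_D(1)[OF m] wp wp r2(1)] r2(1) by simp
qed

lemma M_conj: "m \<in> MM \<Longrightarrow> ipow t j \<circ> m \<circ> ipow t (-j) \<in> MM"
proof (rule M_I)
  assume m: "m \<in> MM"
  show "ipow t j \<circ> m \<circ> ipow t (- j) \<in> Aut E"
    using M_D(1)[OF m] ipow_Aut[OF t_aut] Aut_comp by blast
  have g: "ipow t j (m (ipow t (-j) x)) = x" if "on_geod wm wp x" for x
    using M_D(3)[OF m ipow_geod[OF that]] ipow_cancel[OF t_aut] by simp
  show "(ipow t j \<circ> m \<circ> ipow t (- j)) v0 = v0" using g[OF geod_v0] by simp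
  fix x assume "on_geod wm wp x" then show "(ipow t j \<circ> m \<circ> ipow t (- j)) x = x" using g by simp
qed

lemma rr_rr: "rr (rr x) = x" using rr_inv by (metis comp_apply id_apply)

lemma M_rr: "m \<in> MM \<Longrightarrow> rr \<circ> m \<circ> rr \<in> MM"
proof (rule M_I)
  assume m: "m \<in> MM"
  show "rr \<circ> m \<circ> rr \<in> Aut E" using M_D(1)[OF m] rr_Aut Aut_comp by blast
  show "(rr \<circ> m \<circ> rr) v0 = v0" using M_D(2)[OF m] rr_v0 by simp
  fix x assume "on_geod wm wp x" then show "(rr \<circ> m \<circ> rr) x = x" using M_D(3)[OF m rr_geod] rr_rr by simp
qed

lemma B_step:
  assumes m: "m \<in> MM" and k: "k \<in> Kgrp E v0" and n: "n \<in> Bgrp E wp" and eq: "x = k \<circ> n \<circ> ipow t j"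
  shows "\<exists>k'\<in>Kgrp E v0. \<exists>n'\<in>Bgrp E wp. x \<circ> m = k' \<circ> n' \<circ> ipow t j"
proof -
  have mA: "m \<in> Aut E" "m v0 = v0" using M_D[OF m] by auto
  have mg: "\<And>z. on_geod wm wp z \<Longrightarrow> m z = z" using M_D(3)[OF m] by blast
  have nA: "n \<in> Aut E" "end_act n wp = wp" using n unfolding Bgrp_def by auto
  obtain y where y: "n y = y" using n unfolding Bgrp_def by auto
  have kA: "k \<in> Aut E" "k v0 = v0" using k unfolding Kgrp_def by auto
  define b1 where "b1 = inv m \<circ> n \<circ> m"
  define b2 where "b2 = inv m \<circ> ipow t j \<circ> m \<circ> ipow t (-j)"
  have imA: "inv m \<in> Aut E" using Aut_inv[OF mA(1)] .
  have b1A: "b1 \<in> Aut E" unfolding b1_def using imA nA mA Aut_comp by blast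
  have b2A: "b2 \<in> Aut E" unfolding b2_def using imA mA ipow_Aut[OF t_aut] Aut_comp by blast
  have mwp: "end_act m wp = wp" using M_wp[OF m] .
  have imwp: "end_act (inv m) wp = wp" using end_act_inv[OF mA(1) mwp] .
  have ip1: "end_act (ipow t j) wp = wp" "end_act (ipow t (-j)) wp = wp"
    using ipow_end[OF t_aut t_fix(2)] by auto
  have b1w: "end_act b1 wp = wp" unfolding b1_def
    by (simp only: end_act_comp[symmetric] mwp nA(2) imwp)
  have b2w: "end_act b2 wp = wp" unfolding b2_def
    by (simp only: end_act_comp[symmetric] mwp ip1 imwp)
  have b1y: "b1 (inv m y) = inv m y" unfolding b1_def using y Aut_inv_r'[OF mA(1)] by simp
  obtain i where i: "b1 (r2 i) = r2 i" using fix_ray[OF b1A b1y b1w] by blast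
  have b2i: "b2 (r2 i) = r2 i"
  proof -
    have "m (ipow t (-j) (r2 i)) = ipow t (-j) (r2 i)" using mg ipow_geod geod_r2 by blast
    moreover have "inv m (r2 i) = r2 i" using mg[OF geod_r2] Aut_inv_l'[OF mA(1)] by metis
    ultimately show ?thesis unfolding b2_def using ipow_cancel[OF t_aut] by simp
  qed
  define n' where "n' = b1 \<circ> b2"
  have "n' \<in> Bgrp E wp" unfolding Bgrp_def
  proof (intro CollectI conjI)
    show "n' \<in> Aut E" unfolding n'_def using b1A b2A Aut_comp by blast
    show "end_act n' wp = wp" unfolding n'_def by (simp only: end_act_comp[symmetric] b1w b2w)
    show "\<exists>x. n' x = x" using b2i i unfolding n'_def by (intro exI[of _ "r2 i"]) simp
  qed
  moreover have "k \<circ> m \<in> Kgrp E v0" unfolding Kgrp_def using kA mA Aut_comp by auto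
  moreover have "x \<circ> m = (k \<circ> m) \<circ> n' \<circ> ipow t j"
  proof
    fix z
    show "(x \<circ> m) z = ((k \<circ> m) \<circ> n' \<circ> ipow t j) z"
      unfolding eq n'_def b1_def b2_def using Aut_inv_r'[OF mA(1)] ipow_cancel[OF t_aut] by simp
  qed
  ultimately show ?thesis by blast
qed

lemma Hc_M:
  assumes m: "m \<in> MM"
  shows "Hc E v0 wp t (x \<circ> m) = Hc E v0 wp t x"
proof -
  have xm: "x \<circ> m \<circ> inv m = x" using Aut_inv_r[OF M_D(1)[OF m]] by (simp add: comp_assoc)
  have "(\<exists>k\<in>Kgrp E v0. \<exists>n\<in>Bgrp E wp. x \<circ> m = k \<circ> n \<circ> ipow t j) \<longleftrightarrow>
        (\<exists>k\<in>Kgrp E v0. \<exists>n\<in>Bgrp E wp. x = k \<circ> n \<circ> ipow t j)" for j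
  proof
    assume "\<exists>k\<in>Kgrp E v0. \<exists>n\<in>Bgrp E wp. x \<circ> m = k \<circ> n \<circ> ipow t j"
    then obtain k n where "k \<in> Kgrp E v0" "n \<in> Bgrp E wp" "x \<circ> m = k \<circ> n \<circ> ipow t j" by blast
    from B_step[OF M_inv[OF m] this] show "\<exists>k\<in>Kgrp E v0. \<exists>n\<in>Bgrp E wp. x = k \<circ> n \<circ> ipow t j"
      using xm by simp
  next
    assume "\<exists>k\<in>Kgrp E v0. \<exists>n\<in>Bgrp E wp. x = k \<circ> n \<circ> ipow t j"
    then obtain k n where "k \<in> Kgrp E v0" "n \<in> Bgrp E wp" "x = k \<circ> n \<circ> ipow t j" by blast
    from B_step[OF m this] show "\<exists>k\<in>Kgrp E v0. \<exists>n\<in>Bgrp E wp. x \<circ> m = k \<circ> n \<circ> ipow t j" .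
  qed
  then show ?thesis unfolding Hc_def by simp
qed

lemma dsw_M:
  assumes m: "m \<in> MM"
  shows "dsw qq E v0 wp t rr s s' (x \<circ> m) = dsw qq E v0 wp t rr s s' x"
proof -
  have "x \<circ> m \<circ> rr = (x \<circ> rr) \<circ> (rr \<circ> m \<circ> rr)" by (rule ext) (simp add: rr_rr)
  then have "Hc E v0 wp t (x \<circ> m \<circ> rr) = Hc E v0 wp t (x \<circ> rr)" using Hc_M[OF M_rr[OF m]] by simp
  then show ?thesis unfolding dsw_def using Hc_M[OF m] by simp
qed

end




lemma qtop_istop: "istopology (\<lambda>U. U \<subseteq> p ` topspace X \<and> openin X {x \<in> topspace X. p x \<in> U})"
proof -
  define L where "L U \<longleftrightarrow> U \<subseteq> p ` topspace X \<and> openin X {x \<in> topspace X. p x \<in> U}" for U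
  have A: "L (S \<inter> T)" if S: "L S" and T: "L T" for S T
  proof -
    have "{x \<in> topspace X. p x \<in> S \<inter> T} = {x \<in> topspace X. p x \<in> S} \<inter> {x \<in> topspace X. p x \<in> T}" by auto
    then show ?thesis using S T unfolding L_def by auto
  qed
  have B: "L (\<Union>K)" if K: "\<forall>U\<in>K. L U" for K
  proof -
    have "{x \<in> topspace X. p x \<in> \<Union>K} = \<Union>((\<lambda>U. {x \<in> topspace X. p x \<in> U}) ` K)" by auto
    then show ?thesis using K unfolding L_def by auto
  qed
  have "istopology L" unfolding istopology_def using A B by blast
  then show ?thesis unfolding L_def[abs_def] .
qed

lemma qtop_open: "openin (qtop X p) U \<longleftrightarrow> U \<subseteq> p ` topspace X \<and> openin X {x \<in> topspace X. p x \<in> U}"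
  unfolding qtop_def by (simp only: topology_inverse'[OF qtop_istop])

lemma qtop_topspace: "topspace (qtop X p) = p ` topspace X"
proof
  show "topspace (qtop X p) \<subseteq> p ` topspace X" unfolding topspace_def qtop_open by auto
  have "openin (qtop X p) (p ` topspace X)" unfolding qtop_open
  proof
    have "{x \<in> topspace X. p x \<in> p ` topspace X} = topspace X" by auto
    then show "openin X {x \<in> topspace X. p x \<in> p ` topspace X}" by simp
  qed simp
  then show "p ` topspace X \<subseteq> topspace (qtop X p)" using openin_subset by blast
qed

lemma qtop_cont_p: "continuous_map X (qtop X p) p"
  unfolding continuous_map_def qtop_topspace qtop_open by auto

lemma qtop_cont:
  assumes h: "continuous_map X Y h" and eq: "\<And>x. x \<in> topspace X \<Longrightarrow> \<phi> (p x) = h x"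
  shows "continuous_map (qtop X p) Y \<phi>"
  unfolding continuous_map_def
proof (intro conjI allI impI)
  show "\<phi> \<in> topspace (qtop X p) \<rightarrow> topspace Y"
    using h eq unfolding qtop_topspace continuous_map_def by auto
  fix U assume U: "openin Y U"
  have "p x \<in> {y \<in> topspace (qtop X p). \<phi> y \<in> U} \<longleftrightarrow> h x \<in> U" if "x \<in> topspace X" for x
    using that eq by (auto simp: qtop_topspace)
  then have "{x \<in> topspace X. p x \<in> {y \<in> topspace (qtop X p). \<phi> y \<in> U}} = {x \<in> topspace X. h x \<in> U}"
    by blast
  then show "openin (qtop X p) {x \<in> topspace (qtop X p). \<phi> x \<in> U}"
    unfolding qtop_open using openin_continuous_map_preimage[OF h U] by (auto simp: qtop_topspace)
qed

lemma open_finite_conj: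
  assumes "finite J" "\<And>j. j \<in> J \<Longrightarrow> openin X {x \<in> topspace X. P j x}"
  shows "openin X {x \<in> topspace X. \<forall>j\<in>J. P j x}"
  using assms
proof (induction J rule: finite_induct)
  case empty then show ?case by simp
next
  case (insert a J)
  have "{x \<in> topspace X. \<forall>j\<in>insert a J. P j x} = {x \<in> topspace X. P a x} \<inter> {x \<in> topspace X. \<forall>j\<in>J. P j x}"
    by auto
  then show ?case using insert by auto
qed

lemma Gtop_topspace: "topspace (Gtop E) = Aut E"
  unfolding Gtop_def by simp

lemma Gtop_eval_cont: "continuous_map (Gtop E) (discrete_topology UNIV) (\<lambda>g. g a)"
  unfolding Gtop_def
  by (rule continuous_map_from_subtopology, rule continuous_map_product_projection) simp

lemma Gtop_open_eval: "openin (Gtop E) {g \<in> Aut E. g a \<in> W}"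
  using openin_continuous_map_preimage[OF Gtop_eval_cont[of E a], of W] by (simp add: Gtop_topspace)

lemma Gtop_rmul_cont:
  assumes c: "c \<in> Aut E"
  shows "continuous_map (Gtop E) (Gtop E) (\<lambda>g. g \<circ> c)"
proof -
  have "continuous_map (Gtop E) (product_topology (\<lambda>_. discrete_topology UNIV) UNIV) (\<lambda>g. g \<circ> c)"
    unfolding continuous_map_componentwise_UNIV by (simp add: comp_def Gtop_eval_cont)
  moreover have "(\<lambda>g. g \<circ> c) \<in> topspace (Gtop E) \<rightarrow> Aut E" using Aut_comp c by (auto simp: Gtop_topspace)
  ultimately show ?thesis unfolding Gtop_def[of E] continuous_map_in_subtopology
    by (simp add: Gtop_def[symmetric])
qed

lemma Gtop_open_rmul:
  assumes c: "c \<in> Aut E" and U: "openin (Gtop E) {g \<in> Aut E. P g}"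
  shows "openin (Gtop E) {g \<in> Aut E. P (g \<circ> c)}"
proof -
  have "{g \<in> topspace (Gtop E). g \<circ> c \<in> {g \<in> Aut E. P g}} = {g \<in> Aut E. P (g \<circ> c)}"
    using Aut_comp c by (auto simp: Gtop_topspace)
  then show ?thesis using openin_continuous_map_preimage[OF Gtop_rmul_cont[OF c] U] by simp
qed

lemma Gtop_open_agree:
  assumes "finite T" shows "openin (Gtop E) {g \<in> Aut E. \<forall>x\<in>T. g x = g0 x}"
  using open_finite_conj[OF assms, of "Gtop E" "\<lambda>x g. g x = g0 x"] Gtop_open_eval[of E _ "{g0 _}"]
  by (simp add: Gtop_topspace)

lemma lcoset_mem: "id \<in> H \<Longrightarrow> g \<in> lcoset g H"
  unfolding lcoset_def by (metis comp_id image_eqI)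

lemma lcoset_eqD: "id \<in> H \<Longrightarrow> lcoset g H = lcoset g' H \<Longrightarrow> \<exists>u\<in>H. g' = g \<circ> u"
  using lcoset_mem[of H g'] unfolding lcoset_def by auto

lemma lcoset_eqI:
  assumes comp: "\<And>a b. a \<in> H \<Longrightarrow> b \<in> H \<Longrightarrow> a \<circ> b \<in> H"
    and inv: "\<And>a. a \<in> H \<Longrightarrow> inv a \<in> H" and bij: "\<And>a. a \<in> H \<Longrightarrow> a \<circ> inv a = id"
    and u: "u \<in> H"
  shows "lcoset (g \<circ> u) H = lcoset g H"
proof
  show "lcoset (g \<circ> u) H \<subseteq> lcoset g H"
    unfolding lcoset_def using comp u by (auto simp: comp_assoc)
  show "lcoset g H \<subseteq> lcoset (g \<circ> u) H"
  proof
    fix x assume "x \<in> lcoset g H"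
    then obtain h where h: "h \<in> H" "x = g \<circ> h" unfolding lcoset_def by auto
    have "x = (g \<circ> u) \<circ> (inv u \<circ> h)" using h bij[OF u] by (metis comp_assoc id_comp)
    moreover have "inv u \<circ> h \<in> H" using comp inv u h by blast
    ultimately show "x \<in> lcoset (g \<circ> u) H" unfolding lcoset_def by blast
  qed
qed




locale tsetf = tset +
  fixes f and s s' :: complex
  assumes f: "f \<in> Cc_lc (qtop (Gtop E) (\<lambda>g. lcoset g (Mgrp E v0 wm wp)))"
begin

abbreviation "MT \<equiv> Mtau MM t"
abbreviation "XM \<equiv> qtop (Gtop E) (\<lambda>g. lcoset g MM)"
abbreviation "XT \<equiv> qtop (Gtop E) (\<lambda>g. lcoset g MT)"

definition tm where
  "tm g j = f (lcoset (g \<circ> ipow t j) MM) * dsw q E v0 wp t rr s (- cnj s') (g \<circ> ipow t j)"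

lemma radon_tm: "radon q E v0 wm wp t rr s s' f g = infsum (tm g) UNIV"
  unfolding radon_def tm_def by simp

lemma ipow_add_pt: "ipow t (a+b) z = ipow t a (ipow t b z)"
  using ipow_add[OF t_aut] by simp

lemma ipow_cancel': "ipow t j (ipow t (-j) x) = x" "ipow t (-j) (ipow t j x) = x"
  using ipow_cancel[OF t_aut] by auto

lemma pM_eq: "m \<in> MM \<Longrightarrow> lcoset (g \<circ> m) MM = lcoset g MM"
  by (rule lcoset_eqI[OF M_comp M_inv Aut_inv_r[OF M_D(1)]])

lemma MT_I: "m \<in> MM \<Longrightarrow> m \<circ> ipow t j \<in> MT"
  unfolding Mtau_def by blast

lemma MT_D: "u \<in> MT \<Longrightarrow> \<exists>m j. m \<in> MM \<and> u = m \<circ> ipow t j"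
  unfolding Mtau_def by blast

lemma MT_id: "id \<in> MT"
  using MT_I[OF M_id, of 0] by (simp add: ipow_0)

lemma MT_Aut: "u \<in> MT \<Longrightarrow> u \<in> Aut E"
  using MT_D M_D(1) ipow_Aut[OF t_aut] Aut_comp by blast

lemma MT_comp:
  assumes u: "u \<in> MT" and v: "v \<in> MT" shows "u \<circ> v \<in> MT"
proof -
  obtain m a where ma: "m \<in> MM" "u = m \<circ> ipow t a" using MT_D[OF u] by blast
  obtain m' b where mb: "m' \<in> MM" "v = m' \<circ> ipow t b" using MT_D[OF v] by blast
  have e: "u \<circ> v = (m \<circ> (ipow t a \<circ> m' \<circ> ipow t (-a))) \<circ> ipow t (a+b)"
    unfolding ma mb by (rule ext) (simp add: ipow_add_pt ipow_cancel')
  have mm: "m \<circ> (ipow t a \<circ> m' \<circ> ipow t (-a)) \<in> MM" using M_comp M_conj ma mb by blast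
  show ?thesis unfolding e by (rule MT_I[OF mm])
qed

lemma MT_inv:
  assumes u: "u \<in> MT" shows "inv u \<in> MT"
proof -
  obtain m a where ma: "m \<in> MM" "u = m \<circ> ipow t a" using MT_D[OF u] by blast
  have mA: "m \<in> Aut E" using M_D(1)[OF ma(1)] .
  have "inv u = ipow t (-a) \<circ> inv m"
  proof (rule inv_unique_comp)
    show "u \<circ> (ipow t (- a) \<circ> inv m) = id" unfolding ma
      by (rule ext) (simp add: ipow_cancel' Aut_inv_r'[OF mA])
    show "ipow t (- a) \<circ> inv m \<circ> u = id" unfolding ma
      by (rule ext) (simp add: ipow_cancel' Aut_inv_l'[OF mA])
  qed
  also have "\<dots> = (ipow t (-a) \<circ> inv m \<circ> ipow t (-(-a))) \<circ> ipow t (-a)"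
    by (rule ext) (simp add: ipow_cancel')
  finally show ?thesis by (simp only:) (rule MT_I[OF M_conj[OF M_inv[OF ma(1)]]])
qed

lemma pT_eq: "u \<in> MT \<Longrightarrow> lcoset (g \<circ> u) MT = lcoset g MT"
  by (rule lcoset_eqI[OF MT_comp MT_inv Aut_inv_r[OF MT_Aut]])

lemma tm_M:
  assumes m: "m \<in> MM" shows "tm (g \<circ> m) i = tm g i"
proof -
  define mm where "mm = ipow t (-i) \<circ> m \<circ> ipow t (-(-i))"
  have mm: "mm \<in> MM" unfolding mm_def using M_conj[OF m] .
  have "g \<circ> m \<circ> ipow t i = (g \<circ> ipow t i) \<circ> mm"
    unfolding mm_def by (rule ext) (simp add: ipow_cancel')
  then show ?thesis unfolding tm_def using pM_eq[OF mm] dsw_M[OF mm] by simp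
qed

lemma radon_inv:
  assumes m: "m \<in> MM"
  shows "radon q E v0 wm wp t rr s s' f (g \<circ> (m \<circ> ipow t k)) = radon q E v0 wm wp t rr s s' f g"
proof -
  have e: "(g \<circ> (m \<circ> ipow t k)) \<circ> ipow t j = (g \<circ> m) \<circ> ipow t (k+j)" for j
    by (rule ext) (simp add: ipow_add_pt)
  have "infsum (tm (g \<circ> (m \<circ> ipow t k))) UNIV = infsum (\<lambda>j. tm (g \<circ> m) (k+j)) UNIV"
    unfolding tm_def e by simp
  also have "\<dots> = infsum (tm (g \<circ> m)) UNIV"
    by (rule infsum_reindex_bij_betw) (rule bij_betwI[of _ _ _ "\<lambda>j. j - k"], auto)
  also have "\<dots> = infsum (tm g) UNIV"
  proof -
    have "tm (g \<circ> m) = tm g" by (rule ext) (rule tm_M[OF m])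
    then show ?thesis by simp
  qed
  finally show ?thesis unfolding radon_tm .
qed

definition FF where "FF P = radon q E v0 wm wp t rr s s' f (SOME g. g \<in> Aut E \<and> P = lcoset g MT)"

lemma FF_eq:
  assumes g: "g \<in> Aut E" shows "FF (lcoset g MT) = radon q E v0 wm wp t rr s s' f g"
proof -
  define g' where "g' = (SOME g'. g' \<in> Aut E \<and> lcoset g MT = lcoset g' MT)"
  have "g' \<in> Aut E \<and> lcoset g MT = lcoset g' MT" unfolding g'_def by (rule someI[of _ g]) (use g in simp)
  then obtain u where u: "u \<in> MT" "g' = g \<circ> u" using lcoset_eqD[OF MT_id] by blast
  obtain m k where mk: "m \<in> MM" "u = m \<circ> ipow t k" using MT_D[OF u(1)] by blast
  show ?thesis unfolding FF_def g'_def[symmetric] u(2) mk(2) using radon_inv[OF mk(1)] by simp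
qed

lemma f_lc: "P \<in> topspace XM \<Longrightarrow> \<exists>U. openin XM U \<and> P \<in> U \<and> (\<forall>y\<in>U. f y = f P)"
  using conjunct1[OF f[unfolded Cc_lc_def mem_Collect_eq]] by blast

definition "CC = XM closure_of {P \<in> topspace XM. f P \<noteq> 0}"

lemma CC_compact: "compactin XM CC"
  unfolding CC_def by (rule conjunct2[OF f[unfolded Cc_lc_def mem_Collect_eq]])

lemma XM_top: "topspace XM = (\<lambda>g. lcoset g MM) ` Aut E"
  by (simp add: qtop_topspace Gtop_topspace)

lemma XT_top: "topspace XT = (\<lambda>g. lcoset g MT) ` Aut E"
  by (simp add: qtop_topspace Gtop_topspace)

lemma f_level_open: "openin (Gtop E) {g \<in> Aut E. f (lcoset g MM) = c}"
proof (subst openin_subopen, intro ballI)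
  fix g1 assume g1: "g1 \<in> {g \<in> Aut E. f (lcoset g MM) = c}"
  have g1A: "g1 \<in> Aut E" and g1c: "f (lcoset g1 MM) = c" using g1 by auto
  have "lcoset g1 MM \<in> topspace XM" using XM_top g1A by blast
  then obtain U where U: "openin XM U" "lcoset g1 MM \<in> U" "\<forall>y\<in>U. f y = f (lcoset g1 MM)"
    using f_lc by blast
  define V where "V = {x \<in> topspace (Gtop E). lcoset x MM \<in> U}"
  have "openin (Gtop E) V" unfolding V_def by (rule conjunct2[OF U(1)[unfolded qtop_open]])
  moreover have "g1 \<in> V" unfolding V_def Gtop_topspace using g1A U(2) by blast
  moreover have "V \<subseteq> {g \<in> Aut E. f (lcoset g MM) = c}"
  proof
    fix x assume "x \<in> V"
    then have "x \<in> Aut E" "lcoset x MM \<in> U" unfolding V_def Gtop_topspace by auto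
    then show "x \<in> {g \<in> Aut E. f (lcoset g MM) = c}" using U(3) g1c by simp
  qed
  ultimately show "\<exists>T. openin (Gtop E) T \<and> g1 \<in> T \<and> T \<subseteq> {g \<in> Aut E. f (lcoset g MM) = c}" by blast
qed

definition "ev P = (SOME h. h \<in> P) v0"

lemma ev_pM: "ev (lcoset g MM) = g v0"
proof -
  have "\<exists>h. h \<in> lcoset g MM" using lcoset_mem[OF M_id] by blast
  then have "(SOME h. h \<in> lcoset g MM) \<in> lcoset g MM" by (rule someI_ex)
  then obtain m where "m \<in> MM" "(SOME h. h \<in> lcoset g MM) = g \<circ> m" unfolding lcoset_def by auto
  moreover have "m v0 = v0" using M_D(2) \<open>m \<in> MM\<close> by blast
  ultimately show ?thesis unfolding ev_def by simp
qed

definition "SS = ev ` CC"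

lemma SS_finite: "finite SS"
proof -
  have "continuous_map XM (discrete_topology UNIV) ev"
    by (rule qtop_cont[OF Gtop_eval_cont[of E v0]]) (simp add: ev_pM)
  then have "compactin (discrete_topology UNIV) SS" unfolding SS_def using image_compactin CC_compact by blast
  then show ?thesis using compactin_discrete_topology by blast
qed

lemma supp_CC: "g \<in> Aut E \<Longrightarrow> f (lcoset g MM) \<noteq> 0 \<Longrightarrow> lcoset g MM \<in> CC"
proof -
  assume g: "g \<in> Aut E" and nz: "f (lcoset g MM) \<noteq> 0"
  have "lcoset g MM \<in> topspace XM" using XM_top g by blast
  then have "lcoset g MM \<in> {P \<in> topspace XM. f P \<noteq> 0}" using nz by blast
  moreover have "{P \<in> topspace XM. f P \<noteq> 0} \<subseteq> CC" unfolding CC_def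
    by (rule closure_of_subset) blast
  ultimately show ?thesis by blast
qed

lemma CC_SS: "lcoset g MM \<in> CC \<Longrightarrow> g v0 \<in> SS"
  unfolding SS_def using image_eqI[of "g v0" ev "lcoset g MM" CC] ev_pM by simp

definition "T0 g0 = inv g0 ` SS"
definition "J0 g0 = {j. ipow t j v0 \<in> T0 g0}"

lemma T0_finite: "finite (T0 g0)" unfolding T0_def using SS_finite by simp

lemma J0_finite: "finite (J0 g0)"
proof -
  have "inj (\<lambda>j. ipow t j v0)" by (rule injI) (rule ipow_v0_inj)
  then have "finite ((\<lambda>j. ipow t j v0) -` T0 g0)" using finite_vimageI T0_finite by blast
  then show ?thesis unfolding J0_def vimage_def .
qed

lemma LF:
  assumes g0: "g0 \<in> Aut E" and g: "g \<in> Aut E" and agree: "\<forall>x\<in>T0 g0. g x = g0 x"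
    and C: "lcoset (g \<circ> ipow t j) MM \<in> CC"
  shows "j \<in> J0 g0"
proof -
  define s0 where "s0 = g (ipow t j v0)"
  have "s0 \<in> SS" using CC_SS[OF C] unfolding s0_def by simp
  then have x: "inv g0 s0 \<in> T0 g0" unfolding T0_def by blast
  then have "g (inv g0 s0) = s0" using agree[rule_format, OF x] Aut_inv_r'[OF g0] by simp
  then have "g (inv g0 s0) = g (ipow t j v0)" unfolding s0_def by simp
  then have "inv g0 s0 = ipow t j v0" by (rule injD[OF Aut_inj[OF g]])
  then show ?thesis using x unfolding J0_def by simp
qed

lemma tm_nz: "g \<in> Aut E \<Longrightarrow> tm g j \<noteq> 0 \<Longrightarrow> lcoset (g \<circ> ipow t j) MM \<in> CC"
proof -
  assume g: "g \<in> Aut E" and nz: "tm g j \<noteq> 0"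
  then have "f (lcoset (g \<circ> ipow t j) MM) \<noteq> 0" unfolding tm_def by auto
  then show ?thesis by (rule supp_CC[OF Aut_comp[OF g ipow_Aut[OF t_aut]]])
qed

lemma radon_finite:
  assumes g0: "g0 \<in> Aut E" and g: "g \<in> Aut E" and agree: "\<forall>x\<in>T0 g0. g x = g0 x"
  shows "radon q E v0 wm wp t rr s s' f g = sum (tm g) (J0 g0)"
proof -
  have "infsum (tm g) UNIV = infsum (tm g) (J0 g0)"
    by (rule infsum_cong_neutral) (use tm_nz[OF g] LF[OF g0 g agree] in auto)
  then show ?thesis unfolding radon_tm using J0_finite by simp
qed

lemma Hc_comp_local:
  assumes g: "g \<in> Aut E" and g0: "g0 \<in> Aut E" and c: "c \<in> Aut E" and w: "g w = v0" "g0 w = v0"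
  shows "Hc E v0 wp t (g \<circ> c) = Hc E v0 wp t (g0 \<circ> c)"
  by (rule Hc_local[OF Aut_comp[OF g0 c] Aut_comp[OF g c], of "inv c w"]) (use w Aut_inv_r'[OF c] in auto)

lemma dd_local:
  assumes g: "g \<in> Aut E" and g0: "g0 \<in> Aut E" and c: "c \<in> Aut E" and w: "g w = v0" "g0 w = v0"
  shows "dsw q E v0 wp t rr s s'' (g \<circ> c) = dsw q E v0 wp t rr s s'' (g0 \<circ> c)"
proof -
  have "Hc E v0 wp t (g \<circ> (c \<circ> rr)) = Hc E v0 wp t (g0 \<circ> (c \<circ> rr))"
    by (rule Hc_comp_local[OF g g0 Aut_comp[OF c rr_Aut] w])
  then show ?thesis unfolding dsw_def using Hc_comp_local[OF g g0 c w] by (simp add: comp_assoc)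
qed

definition "NN g0 = {g \<in> Aut E. (\<forall>x\<in>T0 g0. g x = g0 x) \<and> g (inv g0 v0) = v0 \<and>
   (\<forall>j\<in>J0 g0. f (lcoset (g \<circ> ipow t j) MM) = f (lcoset (g0 \<circ> ipow t j) MM))}"

lemma NN_open: "openin (Gtop E) (NN g0)"
proof -
  have A1: "openin (Gtop E) {g \<in> Aut E. \<forall>x\<in>T0 g0. g x = g0 x}" by (rule Gtop_open_agree[OF T0_finite])
  have A2: "openin (Gtop E) {g \<in> Aut E. g (inv g0 v0) \<in> {v0}}" by (rule Gtop_open_eval)
  have A3: "openin (Gtop E) {g \<in> topspace (Gtop E). \<forall>j\<in>J0 g0. f (lcoset (g \<circ> ipow t j) MM) = f (lcoset (g0 \<circ> ipow t j) MM)}"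
    by (rule open_finite_conj[OF J0_finite])
       (simp add: Gtop_topspace Gtop_open_rmul[OF ipow_Aut[OF t_aut] f_level_open])
  have "NN g0 = {g \<in> Aut E. \<forall>x\<in>T0 g0. g x = g0 x} \<inter> {g \<in> Aut E. g (inv g0 v0) \<in> {v0}} \<inter>
     {g \<in> topspace (Gtop E). \<forall>j\<in>J0 g0. f (lcoset (g \<circ> ipow t j) MM) = f (lcoset (g0 \<circ> ipow t j) MM)}"
    unfolding NN_def Gtop_topspace by auto
  then show ?thesis using A1 A2 A3 by auto
qed

lemma NN_mem: "g0 \<in> Aut E \<Longrightarrow> g0 \<in> NN g0"
  unfolding NN_def using Aut_inv_r' by auto

lemma NN_const:
  assumes g0: "g0 \<in> Aut E" and g: "g \<in> NN g0"
  shows "radon q E v0 wm wp t rr s s' f g = radon q E v0 wm wp t rr s s' f g0"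
proof -
  have gA: "g \<in> Aut E" and agree: "\<forall>x\<in>T0 g0. g x = g0 x" and w: "g (inv g0 v0) = v0"
    and fe: "\<forall>j\<in>J0 g0. f (lcoset (g \<circ> ipow t j) MM) = f (lcoset (g0 \<circ> ipow t j) MM)"
    using g unfolding NN_def by auto
  have w0: "g0 (inv g0 v0) = v0" using Aut_inv_r'[OF g0] .
  have "tm g j = tm g0 j" if "j \<in> J0 g0" for j
    unfolding tm_def using fe that dd_local[OF gA g0 ipow_Aut[OF t_aut] w w0] by simp
  then show ?thesis using radon_finite[OF g0 gA agree] radon_finite[OF g0 g0] by simp
qed

lemma radon_level_open: "openin (Gtop E) {g \<in> Aut E. radon q E v0 wm wp t rr s s' f g = c}"
proof (subst openin_subopen, intro ballI)
  fix g0 assume g0: "g0 \<in> {g \<in> Aut E. radon q E v0 wm wp t rr s s' f g = c}"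
  have g0A: "g0 \<in> Aut E" and g0c: "radon q E v0 wm wp t rr s s' f g0 = c" using g0 by auto
  have "NN g0 \<subseteq> {g \<in> Aut E. radon q E v0 wm wp t rr s s' f g = c}"
  proof
    fix g assume g: "g \<in> NN g0"
    then have "g \<in> Aut E" unfolding NN_def by blast
    then show "g \<in> {g \<in> Aut E. radon q E v0 wm wp t rr s s' f g = c}" using NN_const[OF g0A g] g0c by simp
  qed
  then show "\<exists>T. openin (Gtop E) T \<and> g0 \<in> T \<and> T \<subseteq> {g \<in> Aut E. radon q E v0 wm wp t rr s s' f g = c}"
    using NN_open NN_mem[OF g0A] by blast
qed

definition "psi P = lcoset (SOME g. g \<in> Aut E \<and> P = lcoset g MM) MT"

lemma psi_pM: assumes g: "g \<in> Aut E" shows "psi (lcoset g MM) = lcoset g MT"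
proof -
  define g' where "g' = (SOME g'. g' \<in> Aut E \<and> lcoset g MM = lcoset g' MM)"
  have "g' \<in> Aut E \<and> lcoset g MM = lcoset g' MM" unfolding g'_def by (rule someI[of _ g]) (use g in simp)
  then obtain m where m: "m \<in> MM" "g' = g \<circ> m" using lcoset_eqD[OF M_id] by blast
  have "m \<in> MT" using MT_I[OF m(1), of 0] by (simp add: ipow_0)
  then show ?thesis unfolding psi_def g'_def[symmetric] m(2) using pT_eq by simp
qed

lemma psi_cont: "continuous_map XM XT psi"
  by (rule qtop_cont[OF qtop_cont_p]) (simp add: psi_pM Gtop_topspace)

lemma D_compact: "compactin XT (psi ` CC)"
  using image_compactin[OF CC_compact psi_cont] .

lemma CC_sub: "CC \<subseteq> topspace XM"
  unfolding CC_def by (rule closure_of_subset_topspace)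

lemma D_char:
  assumes g: "g \<in> Aut E"
  shows "lcoset g MT \<in> psi ` CC \<longleftrightarrow> (\<exists>j. lcoset (g \<circ> ipow t j) MM \<in> CC)"
proof
  assume "lcoset g MT \<in> psi ` CC"
  then obtain P where P: "P \<in> CC" "lcoset g MT = psi P" by blast
  then obtain h where h: "h \<in> Aut E" "P = lcoset h MM" using CC_sub XM_top by blast
  then have "lcoset g MT = lcoset h MT" using P psi_pM by simp
  then obtain u where u: "u \<in> MT" "h = g \<circ> u" using lcoset_eqD[OF MT_id] by blast
  obtain m k where mk: "m \<in> MM" "u = m \<circ> ipow t k" using MT_D[OF u(1)] by blast
  define mm where "mm = ipow t (-k) \<circ> m \<circ> ipow t (-(-k))"
  have mm: "mm \<in> MM" unfolding mm_def using M_conj[OF mk(1)] .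
  have "h = (g \<circ> ipow t k) \<circ> mm" unfolding u(2) mk(2) mm_def by (rule ext) (simp add: ipow_cancel')
  then have "lcoset (g \<circ> ipow t k) MM = P" using pM_eq[OF mm] h by simp
  then show "\<exists>j. lcoset (g \<circ> ipow t j) MM \<in> CC" using P by blast
next
  assume "\<exists>j. lcoset (g \<circ> ipow t j) MM \<in> CC"
  then obtain j where j: "lcoset (g \<circ> ipow t j) MM \<in> CC" by blast
  have "psi (lcoset (g \<circ> ipow t j) MM) = lcoset (g \<circ> ipow t j) MT"
    using psi_pM Aut_comp[OF g ipow_Aut[OF t_aut]] by blast
  also have "\<dots> = lcoset g MT" using pT_eq MT_I[OF M_id, of j] by simp
  finally show "lcoset g MT \<in> psi ` CC" using image_eqI[OF _ j, of "lcoset g MT" psi] by simp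
qed

lemma notC_open: "openin (Gtop E) {g \<in> Aut E. lcoset g MM \<notin> CC}"
proof -
  have "closedin XM CC" unfolding CC_def by simp
  then have o: "openin XM (topspace XM - CC)" unfolding closedin_def by blast
  have "openin (Gtop E) {x \<in> topspace (Gtop E). lcoset x MM \<in> topspace XM - CC}"
    using o[unfolded qtop_open] by (rule conjunct2)
  moreover have "{x \<in> topspace (Gtop E). lcoset x MM \<in> topspace XM - CC} = {g \<in> Aut E. lcoset g MM \<notin> CC}"
    using XM_top by (auto simp: Gtop_topspace)
  ultimately show ?thesis by simp
qed

lemma D_closed: "closedin XT (psi ` CC)"
  unfolding closedin_def
proof
  show "psi ` CC \<subseteq> topspace XT" using D_compact compactin_subset_topspace by blast
  define Q where "Q = {g \<in> Aut E. \<forall>j. lcoset (g \<circ> ipow t j) MM \<notin> CC}"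
  have inT: "\<And>x. x \<in> Aut E \<Longrightarrow> lcoset x MT \<in> topspace XT" using XT_top by blast
  have Qeq: "{x \<in> topspace (Gtop E). lcoset x MT \<in> topspace XT - psi ` CC} = Q"
    unfolding Q_def Gtop_topspace using inT D_char by blast
  have "openin (Gtop E) Q"
  proof (subst openin_subopen, intro ballI)
    fix g0 assume g0: "g0 \<in> Q"
    have g0A: "g0 \<in> Aut E" using g0 Q_def by blast
    define V where "V = {g \<in> Aut E. \<forall>x\<in>T0 g0. g x = g0 x} \<inter>
       {g \<in> topspace (Gtop E). \<forall>j\<in>J0 g0. lcoset (g \<circ> ipow t j) MM \<notin> CC}"
    have "openin (Gtop E) V" unfolding V_def
      by (intro openin_Int Gtop_open_agree[OF T0_finite] open_finite_conj[OF J0_finite])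
         (simp add: Gtop_topspace Gtop_open_rmul[OF ipow_Aut[OF t_aut] notC_open])
    moreover have "g0 \<in> V" using g0 unfolding V_def Q_def by (auto simp: Gtop_topspace)
    moreover have "V \<subseteq> Q" unfolding V_def Q_def using LF[OF g0A] by (auto simp: Gtop_topspace)
    ultimately show "\<exists>T. openin (Gtop E) T \<and> g0 \<in> T \<and> T \<subseteq> Q" by blast
  qed
  then show "openin XT (topspace XT - psi ` CC)" unfolding qtop_open using Qeq XT_top
    by (auto simp: Gtop_topspace)
qed

lemma FF_Cc: "FF \<in> Cc_lc XT"
  unfolding Cc_lc_def
proof (intro CollectI conjI ballI)
  fix P assume P: "P \<in> topspace XT"
  then obtain g0 where g0: "g0 \<in> Aut E" "P = lcoset g0 MT" using XT_top by blast
  define U where "U = {Q \<in> topspace XT. FF Q = FF P}"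
  have inT: "\<And>x. x \<in> Aut E \<Longrightarrow> lcoset x MT \<in> topspace XT" using XT_top by blast
  have "lcoset x MT \<in> U \<longleftrightarrow> radon q E v0 wm wp t rr s s' f x = FF P" if "x \<in> Aut E" for x
    using that by (simp add: U_def inT FF_eq)
  then have "{x \<in> topspace (Gtop E). lcoset x MT \<in> U} = {g \<in> Aut E. radon q E v0 wm wp t rr s s' f g = FF P}"
    unfolding Gtop_topspace by blast
  moreover have "U \<subseteq> (\<lambda>g. lcoset g MT) ` topspace (Gtop E)" unfolding U_def XT_top Gtop_topspace by blast
  ultimately have "openin XT U" unfolding qtop_open using radon_level_open[of "FF P"] by simp
  then show "\<exists>U. openin XT U \<and> P \<in> U \<and> (\<forall>y\<in>U. FF y = FF P)" using P U_def by blast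
next
  have "{x \<in> topspace XT. FF x \<noteq> 0} \<subseteq> psi ` CC"
  proof
    fix P assume "P \<in> {x \<in> topspace XT. FF x \<noteq> 0}"
    then obtain g where g: "g \<in> Aut E" "P = lcoset g MT" "FF P \<noteq> 0" using XT_top by auto
    then have "infsum (tm g) UNIV \<noteq> 0" using FF_eq radon_tm by simp
    have "\<exists>j. tm g j \<noteq> 0"
    proof (rule ccontr)
      assume "\<not> (\<exists>j. tm g j \<noteq> 0)"
      then have "infsum (tm g) UNIV = 0" by (intro infsum_0) auto
      then show False using \<open>infsum (tm g) UNIV \<noteq> 0\<close> by simp
    qed
    then obtain j where "tm g j \<noteq> 0" by blast
    then have "lcoset (g \<circ> ipow t j) MM \<in> CC" using tm_nz g(1) by blast
    then show "P \<in> psi ` CC" using D_char g by blast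
  qed
  then have "XT closure_of {x \<in> topspace XT. FF x \<noteq> 0} \<subseteq> psi ` CC"
    by (rule closure_of_minimal[OF _ D_closed])
  then show "compactin XT (XT closure_of {x \<in> topspace XT. FF x \<noteq> 0})"
    by (rule closed_compactin[OF D_compact _ closedin_closure_of])
qed

lemma result:
  "(\<forall>g\<in>Aut E. finite {j. f (lcoset (g \<circ> ipow t j) MM) *
                           dsw q E v0 wp t rr s (- cnj s') (g \<circ> ipow t j) \<noteq> 0}) \<and>
   (\<exists>F \<in> Cc_lc XT. \<forall>g\<in>Aut E. F (lcoset g MT) = radon q E v0 wm wp t rr s s' f g)"
proof
  show "\<forall>g\<in>Aut E. finite {j. f (lcoset (g \<circ> ipow t j) MM) *
                           dsw q E v0 wp t rr s (- cnj s') (g \<circ> ipow t j) \<noteq> 0}"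
  proof
    fix g assume g: "g \<in> Aut E"
    have "{j. f (lcoset (g \<circ> ipow t j) MM) * dsw q E v0 wp t rr s (- cnj s') (g \<circ> ipow t j) \<noteq> 0} \<subseteq> J0 g"
    proof
      fix j assume "j \<in> {j. f (lcoset (g \<circ> ipow t j) MM) * dsw q E v0 wp t rr s (- cnj s') (g \<circ> ipow t j) \<noteq> 0}"
      then have "tm g j \<noteq> 0" unfolding tm_def by simp
      then have "lcoset (g \<circ> ipow t j) MM \<in> CC" by (rule tm_nz[OF g])
      then show "j \<in> J0 g" using LF[OF g g] by blast
    qed
    then show "finite {j. f (lcoset (g \<circ> ipow t j) MM) * dsw q E v0 wp t rr s (- cnj s') (g \<circ> ipow t j) \<noteq> 0}"
      using J0_finite finite_subset by blast
  qed
  show "\<exists>F \<in> Cc_lc XT. \<forall>g\<in>Aut E. F (lcoset g MT) = radon q E v0 wm wp t rr s s' f g"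
    using FF_Cc FF_eq by blast
qed

end


theorem lemma3p4:
  fixes q :: nat and E :: "'v \<Rightarrow> 'v \<Rightarrow> bool" and v0 :: 'v
    and wm wp :: "(nat \<Rightarrow> 'v) set" and t rr :: "'v \<Rightarrow> 'v"
    and s s' :: complex and f :: "('v \<Rightarrow> 'v) set \<Rightarrow> complex"
  assumes q: "q \<ge> 2"
    and tree: "regular_tree q E"
    and ends: "wm \<in> ends E" "wp \<in> ends E" "wm \<noteq> wp"
    and o_geod: "on_geod wm wp v0"
    and t_aut: "t \<in> Aut E"
    and t_fix: "end_act t wm = wm" "end_act t wp = wp"
    and t_transl: "\<And>x. on_geod wm wp x \<Longrightarrow> (\<exists>r\<in>wp. r 0 = x \<and> t x = r 1)"
    and rr_K: "rr \<in> Kgrp E v0"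
    and rr_inv: "rr \<circ> rr = id"
    and rr_conj: "\<And>j. rr \<circ> ipow t j \<circ> inv rr = ipow t (- j)"
    and f: "f \<in> Cc_lc (qtop (Gtop E) (\<lambda>g. lcoset g (Mgrp E v0 wm wp)))"
  shows "(\<forall>g\<in>Aut E. finite {j. f (lcoset (g \<circ> ipow t j) (Mgrp E v0 wm wp)) *
                           dsw q E v0 wp t rr s (- cnj s') (g \<circ> ipow t j) \<noteq> 0}) \<and>
         (\<exists>F \<in> Cc_lc (qtop (Gtop E) (\<lambda>g. lcoset g (Mtau (Mgrp E v0 wm wp) t))).
            \<forall>g\<in>Aut E. F (lcoset g (Mtau (Mgrp E v0 wm wp) t)) = radon q E v0 wm wp t rr s s' f g)"
proof -
  obtain r1 r2 where r: "r1 \<in> wm" "r1 0 = v0" "r2 \<in> wp" "r2 0 = v0" "r1 1 \<noteq> r2 1"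
    using o_geod unfolding on_geod_def by blast
  interpret tsetf E q v0 wm wp t rr r1 r2 f s s'
    by unfold_locales (use tree ends t_aut t_fix t_transl rr_K rr_inv rr_conj r f in auto)
  show ?thesis by (rule result)
qed

end
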